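(* Let $\mathbf{Q}\subseteq\mathbb{R}^N$ be a bounded convex set, $\phi:\mathbf{Q}\to\mathbb{R}_{\ge0}$ with $0<\int_{\mathbf{Q}}\phi\,\mathrm{d}\mathbf{q}\le\eta<\infty$, $\lambda:\mathbb{R}_{\ge0}\to\mathbb{R}_{\ge0}$ with $\lim_{t\to\infty}\lambda(t)=0$, and agent positions $\mathbf{p}_1(t),\dots,\mathbf{p}_n(t)\in\mathbf{Q}$, $\mathbf{P}(t)=\{\mathbf{p}_1(t),\dots,\mathbf{p}_n(t)\}$. Define $$\hat H(t)=\hat H(t,\mathbf{P}(t))=\frac12\sum_{i=1}^n\int_{\mathbf{Q}}h_\lambda(t,R_i)\lVert\mathbf{q}-\mathbf{p}_i(t)\rVert^2\phi(\mathbf{q})\,\mathrm{d}\mathbf{q},$$ where $h_\lambda(t,R_i)=\exp\{-R_i(\mathbf{q},\mathbf{P}(t))/\lambda(t)\}$ and $R_i(\mathbf{q},\mathbf{P}(t))=\sum_{l=1}^n\kappa(\lVert\mathbf{q}-\mathbf{p}_i(t)\rVert-\lVert\mathbf{q}-\mathbf{p}_l(t)\rVert)$. Then for each $i$, $$\frac{\partial\hat H(t)}{\partial\mathbf{p}_i(t)}=-\int_{\mathbf{Q}}h_\lambda(t,R_i)\big(\mathbf{q}-\mathbf{p}_i(t)\big)\phi(\mathbf{q})\,\mathrm{d}\mathbf{q}.$$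
   Context: $\kappa$ is the Heaviside function ($\kappa(c)=1$ for $c>0$, $0$ for $c\le0$), whose derivative $\delta$ is taken with the convention $\delta(x)=0$ for $x\ne0$, $\int\delta=1$; derivatives of $R_i$ are computed by the chain rule with $\kappa'=\delta$. $\lVert\cdot\rVert$ is the Euclidean norm. *)

theory Defs
  imports "HOL-Analysis.Analysis"
begin

definition kappa :: "real \<Rightarrow> real" where
  "kappa c = (if c > 0 then 1 else 0)"

definition Rfun :: "nat \<Rightarrow> (nat \<Rightarrow> 'a::euclidean_space) \<Rightarrow> nat \<Rightarrow> 'a \<Rightarrow> real" where
  "Rfun n P i q = (\<Sum>l = 1..n. kappa (norm (q - P i) - norm (q - P l)))"

text \<open>h_lambda(t, R_i) = exp(- R_i(q,P) / lambda(t)); here lam is the value lambda(t).\<close>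
definition hlam :: "real \<Rightarrow> nat \<Rightarrow> (nat \<Rightarrow> 'a::euclidean_space) \<Rightarrow> nat \<Rightarrow> 'a \<Rightarrow> real" where
  "hlam lam n P i q = exp (- Rfun n P i q / lam)"

definition Hhat :: "real \<Rightarrow> 'a::euclidean_space set \<Rightarrow> ('a \<Rightarrow> real) \<Rightarrow> nat \<Rightarrow> (nat \<Rightarrow> 'a) \<Rightarrow> real" where
  "Hhat lam Q \<phi> n P =
     1/2 * (\<Sum>i = 1..n. integral Q (\<lambda>q. hlam lam n P i q * (norm (q - P i))^2 * \<phi> q))"

end

theory Submission
  imports Defs
begin

definition rk :: "nat set \<Rightarrow> (nat \<Rightarrow> real) \<Rightarrow> nat \<Rightarrow> nat" where
  "rk J d j = card {l\<in>J. d l < d j}"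

lemma rk_bij:
  assumes "finite J" "inj_on d J"
  shows "bij_betw (rk J d) J {0..<card J}"
proof -
  have inj: "inj_on (rk J d) J"
  proof (rule inj_onI)
    fix j k assume jk: "j \<in> J" "k \<in> J" "rk J d j = rk J d k"
    show "j = k"
    proof (rule ccontr)
      assume "j \<noteq> k"
      then have "d j \<noteq> d k" using assms(2) jk by (meson inj_onD)
      have lt: "rk J d u < rk J d v" if "u \<in> J" "v \<in> J" "d u < d v" for u v
      proof -
        have "{l\<in>J. d l < d u} \<subset> {l\<in>J. d l < d v}"
          using that by auto
        then show ?thesis unfolding rk_def using assms(1)
          by (simp add: psubset_card_mono)
      qed
      show False
        using \<open>d j \<noteq> d k\<close> lt[of j k] lt[of k j] jk by linarith
    qed
  qed
  have sub: "rk J d ` J \<subseteq> {0..<card J}"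
  proof
    fix y assume "y \<in> rk J d ` J"
    then obtain j where j: "j \<in> J" "y = rk J d j" by auto
    have "{l\<in>J. d l < d j} \<subset> J" using j by auto
    then show "y \<in> {0..<card J}" using j assms(1) unfolding rk_def
      by (simp add: psubset_card_mono)
  qed
  have "card (rk J d ` J) = card J" using inj by (simp add: card_image)
  then have "rk J d ` J = {0..<card J}" using sub
    by (simp add: card_subset_eq)
  then show ?thesis using inj by (simp add: bij_betw_def)
qed

lemma sum_rk:
  assumes "finite J" "inj_on d J"
  shows "(\<Sum>j\<in>J. W (rk J d j)) = (\<Sum>k<card J. W k)"
proof -
  have "(\<Sum>j\<in>J. W (rk J d j)) = (\<Sum>k\<in>{0..<card J}. W k)"
    using sum.reindex_bij_betw[OF rk_bij[OF assms], of W] by simp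
  then show ?thesis by (simp add: atLeast0LessThan)
qed

lemma lip_rank:
  fixes d d' :: "nat \<Rightarrow> real" and W :: "nat \<Rightarrow> real"
  assumes J: "finite J" and iJ: "i \<in> J"
    and dd: "\<And>l. l \<noteq> i \<Longrightarrow> d' l = d l"
    and nn: "\<And>l. d l \<ge> 0" "\<And>l. d' l \<ge> 0"
    and inj: "inj_on d J" "inj_on d' J"
    and W: "\<And>k. 0 \<le> W k" "\<And>k. W k \<le> 1"
  shows "\<bar>(\<Sum>j\<in>J. W (rk J d' j) * (d' j)^2) - (\<Sum>j\<in>J. W (rk J d j) * (d j)^2)\<bar>
          \<le> (real (card J) + 1) * \<bar>(d' i)^2 - (d i)^2\<bar>"
proof -
  define \<alpha> where "\<alpha> = (d i)^2"
  define \<beta> where "\<beta> = (d' i)^2"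
  let ?R = "rk J d" and ?R' = "rk J d'"
  have J': "finite (J - {i})" using J by auto
  have s1: "(\<Sum>j\<in>J. W (?R' j)) = (\<Sum>j\<in>J. W (?R j))"
    using sum_rk[OF J inj(1), of W] sum_rk[OF J inj(2), of W] by simp
  have split: "(\<Sum>j\<in>J. f j) = f i + (\<Sum>j\<in>J-{i}. f j)" for f :: "nat \<Rightarrow> real"
    using iJ J by (simp add: sum.remove)
  have s2: "(\<Sum>j\<in>J-{i}. W (?R' j) - W (?R j)) = W (?R i) - W (?R' i)"
    using s1 split[of "\<lambda>j. W (?R' j)"] split[of "\<lambda>j. W (?R j)"]
    by (simp add: sum_subtractf)
  have diff: "(\<Sum>j\<in>J. W (?R' j) * (d' j)^2) - (\<Sum>j\<in>J. W (?R j) * (d j)^2)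
      = W (?R' i) * (\<beta> - \<alpha>) + (\<Sum>j\<in>J-{i}. (W (?R' j) - W (?R j)) * ((d j)^2 - \<alpha>))"
  proof -
    have "(\<Sum>j\<in>J-{i}. (W (?R' j) - W (?R j)) * ((d j)^2 - \<alpha>))
        = (\<Sum>j\<in>J-{i}. W (?R' j) * (d' j)^2 - W (?R j) * (d j)^2) - \<alpha> * (\<Sum>j\<in>J-{i}. W (?R' j) - W (?R j))"
    proof -
      have "(\<Sum>j\<in>J-{i}. (W (?R' j) - W (?R j)) * ((d j)^2 - \<alpha>))
          = (\<Sum>j\<in>J-{i}. (W (?R' j) * (d' j)^2 - W (?R j) * (d j)^2) - \<alpha> * (W (?R' j) - W (?R j)))"
        by (rule sum.cong) (auto simp: algebra_simps dd)
      then show ?thesis by (simp add: sum_subtractf flip: sum_distrib_left)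
    qed
    then have X: "(\<Sum>j\<in>J-{i}. (W (?R' j) - W (?R j)) * ((d j)^2 - \<alpha>))
        = (\<Sum>j\<in>J-{i}. W (?R' j) * (d' j)^2) - (\<Sum>j\<in>J-{i}. W (?R j) * (d j)^2) - \<alpha> * (W (?R i) - W (?R' i))"
      using s2 by (simp add: sum_subtractf)
    have alg: "S = A - B - a*(wi - wi') \<Longrightarrow> L1 = wi'*b + A \<Longrightarrow> L2 = wi*a + B \<Longrightarrow> L1 - L2 = wi'*(b-a) + S"
      for S A B a b wi wi' L1 L2 :: real by (simp add: algebra_simps)
    show ?thesis
      by (rule alg[OF X]) (use split[of "\<lambda>j. W (?R' j) * (d' j)^2"] split[of "\<lambda>j. W (?R j) * (d j)^2"] in \<open>simp_all add: \<alpha>_def \<beta>_def\<close>)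
  qed
  have trm: "\<bar>(W (?R' j) - W (?R j)) * ((d j)^2 - \<alpha>)\<bar> \<le> \<bar>\<beta> - \<alpha>\<bar>" if "j \<in> J - {i}" for j
  proof (cases "?R' j = ?R j")
    case True then show ?thesis by simp
  next
    case False
    have "(d' i < d j) \<noteq> (d i < d j)"
    proof
      assume e: "(d' i < d j) = (d i < d j)"
      have "{l\<in>J. d' l < d' j} = {l\<in>J. d l < d j}"
        using e that dd by (auto, (metis)+)
      then show False using False that dd unfolding rk_def by auto
    qed
    then have "min (d i) (d' i) \<le> d j \<and> d j \<le> max (d i) (d' i)" by auto
    then have "min \<alpha> \<beta> \<le> (d j)^2 \<and> (d j)^2 \<le> max \<alpha> \<beta>"
      unfolding \<alpha>_def \<beta>_def using nn[of i] nn(2)[of i] nn(1)[of j]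
      by (auto simp: min_def max_def power_mono split: if_splits)
    then have h1: "\<bar>(d j)^2 - \<alpha>\<bar> \<le> \<bar>\<beta> - \<alpha>\<bar>" by (auto simp: min_def max_def split: if_splits)
    have h2: "\<bar>W (?R' j) - W (?R j)\<bar> \<le> 1" using W[of "?R' j"] W[of "?R j"] by auto
    show ?thesis unfolding abs_mult
      using mult_mono[OF h2 h1] by simp
  qed
  have "\<bar>\<Sum>j\<in>J-{i}. (W (?R' j) - W (?R j)) * ((d j)^2 - \<alpha>)\<bar> \<le> (\<Sum>j\<in>J-{i}. \<bar>\<beta> - \<alpha>\<bar>)"
    by (rule order_trans[OF sum_abs sum_mono]) (use trm in auto)
  also have "\<dots> \<le> real (card J) * \<bar>\<beta> - \<alpha>\<bar>"
    using J iJ by (simp add: card_Diff_singleton mult_right_mono)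
  finally have A: "\<bar>\<Sum>j\<in>J-{i}. (W (?R' j) - W (?R j)) * ((d j)^2 - \<alpha>)\<bar> \<le> real (card J) * \<bar>\<beta> - \<alpha>\<bar>" .
  have B: "\<bar>W (?R' i) * (\<beta> - \<alpha>)\<bar> \<le> \<bar>\<beta> - \<alpha>\<bar>"
    using W[of "?R' i"] by (simp add: abs_mult mult_left_le_one_le)
  show ?thesis unfolding diff using A B by (simp add: \<alpha>_def \<beta>_def algebra_simps)
qed

lemma bil: "bilinear (\<lambda>(x::'a::real_vector) (y::real). y *\<^sub>R x)"
  unfolding bilinear_def by (auto intro!: linearI simp: algebra_simps)

lemma idl[measurable]: "(\<lambda>x. x) \<in> borel_measurable lebesgue"
  using id_borel_measurable_lebesgue by (simp add: id_def)
lemma nm: "(\<lambda>x::'a::euclidean_space. norm (x - c)) \<in> borel_measurable lebesgue"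
  by measurable
lemma kappa_meas[measurable]: "kappa \<in> borel_measurable borel"
  unfolding kappa_def by measurable
lemma Rfun_meas: "(\<lambda>q. Rfun n P j q) \<in> borel_measurable lebesgue"
  unfolding Rfun_def by measurable
lemma hlam_meas: "(\<lambda>q. hlam lam n P j q * (norm (q - P j))^2) \<in> borel_measurable (lebesgue_on S)"
  apply (rule measurable_restrict_space1)
  unfolding hlam_def Rfun_def by measurable
lemma hlam_meas2: "(\<lambda>q. hlam lam n P j q *\<^sub>R (q - c)) \<in> borel_measurable (lebesgue_on S)"
  apply (rule measurable_restrict_space1)
  unfolding hlam_def Rfun_def by measurable

lemma alg2: fixes G1 G0 w D1 D0 s n2 p f :: real
  shows "G1 - G0 = w*(D1 - D0) \<Longrightarrow> D1 = D0 - 2 * s + n2 \<Longrightarrow> f = w * p * s \<Longrightarrow> 1/2*G1*p - 1/2*G0*p + f = 1/2*w*p*n2"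
proof -
  assume a: "G1 - G0 = w*(D1 - D0)" "D1 = D0 - 2 * s + n2" "f = w * p * s"
  then have g1: "G1 = G0 + w * (n2 - 2 * s)" by (simp add: algebra_simps)
  show ?thesis unfolding g1 a(3) by (simp add: algebra_simps)
qed

lemma Rfun_card: "Rfun n P j q = real (rk {1..n} (\<lambda>l. norm (q - P l)) j)"
proof -
  have "Rfun n P j q = (\<Sum>l\<in>{1..n}. of_bool (0 < norm (q - P j) - norm (q - P l)))"
    unfolding Rfun_def kappa_def by (rule sum.cong) auto
  also have "\<dots> = real (card ({1..n} \<inter> {l. 0 < norm (q - P j) - norm (q - P l)}))"
    by simp
  also have "{1..n} \<inter> {l. 0 < norm (q - P j) - norm (q - P l)} = {l\<in>{1..n}. norm (q - P l) < norm (q - P j)}"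
    by auto
  finally show ?thesis unfolding rk_def .
qed

lemma hlam_rk: "hlam lam n P j q = exp (- real (rk {1..n} (\<lambda>l. norm (q - P l)) j) / lam)"
  unfolding hlam_def Rfun_card by simp

lemma W_bounds: "0 \<le> (lam::real) \<Longrightarrow> 0 \<le> exp (- real m / lam) \<and> exp (- real m / lam) \<le> 1"
  by (auto simp: divide_nonneg_nonneg)

lemma hlam_bounds: "0 \<le> lam \<Longrightarrow> 0 \<le> hlam lam n P j q \<and> hlam lam n P j q \<le> 1"
  unfolding hlam_rk using W_bounds by blast

lemma neg_hyp:
  fixes u v :: "'a::euclidean_space"
  assumes "u \<noteq> v"
  shows "negligible {q. norm (q - u) = norm (q - v)}"
proof -
  have "{q. norm (q - u) = norm (q - v)} = {q. (2 *\<^sub>R (v - u)) \<bullet> q = v \<bullet> v - u \<bullet> u}"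
  proof (intro Collect_cong)
    fix q
    have "norm (q - u) = norm (q - v) \<longleftrightarrow> (norm (q - u))^2 = (norm (q - v))^2"
      by (simp add: power2_eq_iff_nonneg)
    also have "\<dots> \<longleftrightarrow> (2 *\<^sub>R (v - u)) \<bullet> q = v \<bullet> v - u \<bullet> u"
      by (simp add: power2_norm_eq_inner inner_diff_left inner_diff_right inner_commute algebra_simps)
    finally show "norm (q - u) = norm (q - v) \<longleftrightarrow> (2 *\<^sub>R (v - u)) \<bullet> q = v \<bullet> v - u \<bullet> u" .
  qed
  then show ?thesis
    by (simp only:) (rule negligible_hyperplane, use assms in auto)
qed

lemma int_term:
  fixes Q :: "'a::euclidean_space set"
  assumes "bounded Q" "Q \<in> sets lebesgue" "\<phi> absolutely_integrable_on Q" "0 \<le> lam"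
  shows "(\<lambda>q. hlam lam n P j q * (norm (q - P j))^2 * \<phi> q) absolutely_integrable_on Q"
proof -
  obtain B where B: "\<forall>q\<in>Q. norm q \<le> B" using assms(1) bounded_iff by blast
  have "bounded ((\<lambda>q. hlam lam n P j q * (norm (q - P j))^2) ` Q)"
    unfolding bounded_iff
  proof (intro exI ballI)
    fix y assume "y \<in> (\<lambda>q. hlam lam n P j q * (norm (q - P j))^2) ` Q"
    then obtain q where q: "q \<in> Q" "y = hlam lam n P j q * (norm (q - P j))^2" by auto
    have "norm (q - P j) \<le> B + norm (P j)" using B q norm_triangle_ineq4[of q "P j"] by force
    then have "(norm (q - P j))^2 \<le> (B + norm (P j))^2" by (simp add: power_mono)
    moreover have "0 \<le> hlam lam n P j q" "hlam lam n P j q \<le> 1" using hlam_bounds[OF assms(4), of n P j q] by auto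
    ultimately show "norm y \<le> (B + norm (P j))^2" using q
      by (simp add: abs_mult) (metis mult_le_one mult_left_le_one_le zero_le_power2 mult_le_cancel_right1 mult_mono' order_trans mult_left_le_one_le)
  qed
  from absolutely_integrable_bounded_measurable_product[OF bilinear_times hlam_meas assms(2) this assms(3)]
  show ?thesis by simp
qed

lemma int_F:
  fixes Q :: "'a::euclidean_space set"
  assumes "bounded Q" "Q \<in> sets lebesgue" "\<phi> absolutely_integrable_on Q" "0 \<le> lam"
  shows "(\<lambda>q. (hlam lam n P j q * \<phi> q) *\<^sub>R (q - c)) absolutely_integrable_on Q"
proof -
  obtain B where B: "\<forall>q\<in>Q. norm q \<le> B" using assms(1) bounded_iff by blast
  have "bounded ((\<lambda>q. hlam lam n P j q *\<^sub>R (q - c)) ` Q)"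
    unfolding bounded_iff
  proof (intro exI ballI)
    fix y assume "y \<in> (\<lambda>q. hlam lam n P j q *\<^sub>R (q - c)) ` Q"
    then obtain q where q: "q \<in> Q" "y = hlam lam n P j q *\<^sub>R (q - c)" by auto
    have n: "norm (q - c) \<le> B + norm c" using B q norm_triangle_ineq4[of q c] by force
    have "0 \<le> hlam lam n P j q" "hlam lam n P j q \<le> 1" using hlam_bounds[OF assms(4), of n P j q] by auto
    then show "norm y \<le> B + norm c" using q n
      by (simp add: abs_mult) (metis mult_left_le_one_le norm_ge_zero order_trans)
  qed
  from absolutely_integrable_bounded_measurable_product[OF bil hlam_meas2 assms(2) this assms(3)]
  show ?thesis by (simp add: mult.commute)
qed

theorem lemma3:
  fixes Q :: "'a::euclidean_space set"
    and \<phi> :: "'a \<Rightarrow> real"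
    and \<eta> :: real
    and lam :: "real \<Rightarrow> real"
    and p :: "nat \<Rightarrow> real \<Rightarrow> 'a"
    and n i :: nat
    and t :: real
  assumes "bounded Q" and "convex Q"
    and "\<forall>q\<in>Q. \<phi> q \<ge> 0"
    and "\<phi> integrable_on Q"
    and "0 < integral Q \<phi>" and "integral Q \<phi> \<le> \<eta>"
    and "\<forall>s\<ge>0. lam s \<ge> 0"
    and "(lam \<longlongrightarrow> 0) at_top"
    and "\<forall>j\<in>{1..n}. \<forall>s\<ge>0. p j s \<in> Q"
    and "t \<ge> 0"
    and "inj_on (\<lambda>j. p j t) {1..n}"
    and "i \<in> {1..n}"
  shows "((\<lambda>x. Hhat (lam t) Q \<phi> n ((\<lambda>j. p j t)(i := x)))
           has_derivative
          (\<lambda>v. (- integral Q (\<lambda>q. (hlam (lam t) n (\<lambda>j. p j t) i q * \<phi> q) *\<^sub>R (q - p i t))) \<bullet> v))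
         (at (p i t))"
proof -
  define J where "J = {1..n}"
  define P0 where "P0 = (\<lambda>j. p j t)"
  define a where "a = p i t"
  define l0 where "l0 = lam t"
  define Px where "Px = (\<lambda>x. P0(i := x))"
  define F where "F = (\<lambda>q. (hlam l0 n P0 i q * \<phi> q) *\<^sub>R (q - a))"
  define H where "H = (\<lambda>x. Hhat l0 Q \<phi> n (Px x))"
  define gg where "gg = (\<lambda>x q. \<Sum>j\<in>J. hlam l0 n (Px x) j q * (norm (q - Px x j))^2)"
  have iJ: "i \<in> J" using assms(12) J_def by simp
  have finJ: "finite J" "card J = n" unfolding J_def by auto
  have l0: "0 \<le> l0" using assms(7,10) l0_def by simp
  have P0Q: "\<And>j. j \<in> J \<Longrightarrow> P0 j \<in> Q" using assms(9,10) J_def P0_def by simp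
  have aQ: "a \<in> Q" using P0Q[OF iJ] a_def P0_def by simp
  have P0i: "P0 i = a" by (simp add: P0_def a_def)
  have Pxa: "Px a = P0" using P0i by (auto simp: Px_def)
  have injP: "inj_on P0 J" using assms(11) P0_def J_def by simp
  have Qleb: "Q \<in> sets lebesgue" using measurable_convex[OF assms(2,1)] by (simp add: fmeasurableD)
  obtain B where B: "B > 0" "\<And>q. q \<in> Q \<Longrightarrow> norm q \<le> B" using bounded_pos assms(1) by blast
  have phiabs: "\<phi> absolutely_integrable_on Q"
    using nonnegative_absolutely_integrable_1[OF assms(4)] assms(3) by blast
  have phinn: "\<And>q. q \<in> Q \<Longrightarrow> 0 \<le> \<phi> q" using assms(3) by blast
  have intj: "\<And>P j. (\<lambda>q. hlam l0 n P j q * (norm (q - P j))^2 * \<phi> q) integrable_on Q"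
    using int_term[OF assms(1) Qleb phiabs l0] set_lebesgue_integral_eq_integral(1) by blast
  have ggeq: "\<And>x q. 1/2 * gg x q * \<phi> q = 1/2 * (\<Sum>j\<in>J. hlam l0 n (Px x) j q * (norm (q - Px x j))^2 * \<phi> q)"
    unfolding gg_def by (simp add: sum_distrib_right)
  have intsum: "\<And>x. (\<lambda>q. \<Sum>j\<in>J. hlam l0 n (Px x) j q * (norm (q - Px x j))^2 * \<phi> q) integrable_on Q"
    by (rule integrable_sum) (use intj finJ in auto)
  have intg: "\<And>x. (\<lambda>q. 1/2 * gg x q * \<phi> q) integrable_on Q"
    unfolding ggeq by (rule integrable_on_mult_right[OF intsum])
  have Hform: "\<And>x. H x = integral Q (\<lambda>q. 1/2 * gg x q * \<phi> q)"
  proof -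
    fix x
    have "H x = 1/2 * (\<Sum>j\<in>J. integral Q (\<lambda>q. hlam l0 n (Px x) j q * (norm (q - Px x j))^2 * \<phi> q))"
      unfolding H_def Hhat_def J_def by simp
    also have "\<dots> = 1/2 * integral Q (\<lambda>q. \<Sum>j\<in>J. hlam l0 n (Px x) j q * (norm (q - Px x j))^2 * \<phi> q)"
      by (subst integral_sum) (use intj finJ in auto)
    also have "\<dots> = integral Q (\<lambda>q. 1/2 * gg x q * \<phi> q)"
      unfolding ggeq by simp
    finally show "H x = integral Q (\<lambda>q. 1/2 * gg x q * \<phi> q)" .
  qed
  have intF: "F integrable_on Q"
    using int_F[OF assms(1) Qleb phiabs l0, of n P0 i a] set_lebesgue_integral_eq_integral(1)
    unfolding F_def by blast
  define L where "L = (\<lambda>v. (- integral Q F) \<bullet> v)"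
  have main: "(H has_derivative L) (at a)"
  proof -
    have bl: "bounded_linear L" unfolding L_def by (rule bounded_linear_inner_right)
    obtain \<delta> where \<delta>: "\<delta> > 0" "ball a \<delta> \<inter> P0 ` (J - {i}) = {}"
    proof -
      have "a \<notin> P0 ` (J - {i})" using injP iJ P0i by (auto dest: inj_onD)
      moreover have "open (- (P0 ` (J - {i})))" using finJ by (auto intro: finite_imp_closed)
      ultimately obtain e where "e > 0" "ball a e \<subseteq> - (P0 ` (J - {i}))"
        using open_contains_ball by blast
      then show ?thesis using that by blast
    qed
    have "((\<lambda>h. norm (H (a + h) - H a - L h) / norm h) \<longlongrightarrow> 0) (at 0 within ball 0 \<delta>)"
      unfolding tendsto_at_iff_sequentially
    proof (intro allI impI)
      fix X :: "nat \<Rightarrow> 'a" assume Xb: "\<forall>k. X k \<in> ball 0 \<delta> - {0}" and X0: "X \<longlonglongrightarrow> 0"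
      have Xne: "\<And>k. X k \<noteq> 0" and Xd: "\<And>k. norm (X k) < \<delta>" using Xb by auto
      define r where "r = (\<lambda>k q. (1/2 * gg (a + X k) q * \<phi> q - 1/2 * gg a q * \<phi> q + F q \<bullet> X k) / norm (X k))"
      have intFX: "\<And>k. (\<lambda>q. F q \<bullet> X k) integrable_on Q"
        using integrable_linear[OF intF bounded_linear_inner_left] by (simp add: o_def)
      have intr: "\<And>k. r k integrable_on Q"
        unfolding r_def by (intro integrable_on_divide integrable_add integrable_diff intg intFX)
      have Lint: "\<And>k. L (X k) = - integral Q (\<lambda>q. F q \<bullet> X k)"
        using integral_linear[OF intF bounded_linear_inner_left] by (simp add: o_def L_def)
      have req: "(H (a + X k) - H a - L (X k)) / norm (X k) = integral Q (r k)" for k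
      proof -
        have "integral Q (r k) = integral Q (\<lambda>q. 1/2 * gg (a + X k) q * \<phi> q - 1/2 * gg a q * \<phi> q + F q \<bullet> X k) / norm (X k)"
          unfolding r_def by simp
        also have "integral Q (\<lambda>q. 1/2 * gg (a + X k) q * \<phi> q - 1/2 * gg a q * \<phi> q + F q \<bullet> X k)
            = H (a + X k) - H a - L (X k)"
          unfolding integral_add[OF integrable_diff[OF intg intg] intFX] integral_diff[OF intg intg] Hform Lint
          by simp
        finally show ?thesis by simp
      qed
      have comp: "((\<lambda>h. norm (H (a + h) - H a - L h) / norm h) \<circ> X) k = \<bar>integral Q (r k)\<bar>" for k
        using Xne[of k] by (simp add: req[symmetric] abs_divide)
      define E where "E = (\<lambda>u v. {q::'a. norm (q - u) = norm (q - v)})"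
      define N where "N = (\<Union>jl\<in>{(j,l). j \<in> J \<and> l \<in> J \<and> j \<noteq> l}. E (P0 (fst jl)) (P0 (snd jl)))
          \<union> (\<Union>kl\<in>(UNIV::nat set) \<times> (J - {i}). E (a + X (fst kl)) (P0 (snd kl)))"
      have xne: "a + X k \<noteq> P0 l" if "l \<in> J - {i}" for k l
      proof
        assume "a + X k = P0 l"
        moreover have "a + X k \<in> ball a \<delta>" using Xd[of k] by (simp add: dist_norm)
        ultimately show False using \<delta>(2) that by blast
      qed
      have n1: "negligible (\<Union>jl\<in>{(j,l). j \<in> J \<and> l \<in> J \<and> j \<noteq> l}. E (P0 (fst jl)) (P0 (snd jl)))"
      proof (rule negligible_countable_Union)
        have "finite {(j,l). j \<in> J \<and> l \<in> J \<and> j \<noteq> l}"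
          by (rule finite_subset[of _ "J \<times> J"]) (use finJ in auto)
        then show "countable ((\<lambda>jl. E (P0 (fst jl)) (P0 (snd jl))) ` {(j,l). j \<in> J \<and> l \<in> J \<and> j \<noteq> l})"
          by (intro countable_image countable_finite)
      next
        fix S assume "S \<in> (\<lambda>jl. E (P0 (fst jl)) (P0 (snd jl))) ` {(j,l). j \<in> J \<and> l \<in> J \<and> j \<noteq> l}"
        then obtain j l where jl: "j \<in> J" "l \<in> J" "j \<noteq> l" "S = E (P0 j) (P0 l)" by auto
        then have "P0 j \<noteq> P0 l" using injP by (auto dest: inj_onD)
        then show "negligible S" unfolding jl(4) E_def by (rule neg_hyp)
      qed
      have n2: "negligible (\<Union>kl\<in>(UNIV::nat set) \<times> (J - {i}). E (a + X (fst kl)) (P0 (snd kl)))"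
      proof (rule negligible_countable_Union)
        show "countable ((\<lambda>kl. E (a + X (fst kl)) (P0 (snd kl))) ` ((UNIV::nat set) \<times> (J - {i})))"
          by (intro countable_image countable_SIGMA) (use finJ in auto)
      next
        fix S assume "S \<in> (\<lambda>kl. E (a + X (fst kl)) (P0 (snd kl))) ` ((UNIV::nat set) \<times> (J - {i}))"
        then obtain kl where "kl \<in> (UNIV::nat set) \<times> (J - {i})" "S = E (a + X (fst kl)) (P0 (snd kl))" by blast
        then obtain k l where kl: "l \<in> J - {i}" "S = E (a + X k) (P0 l)" by (cases kl) auto
        show "negligible S" unfolding kl(2) E_def by (rule neg_hyp[OF xne[OF kl(1)]])
      qed
      have negN: "negligible N" unfolding N_def using n1 n2 by (rule negligible_Un)
      have qf1: "norm (q - P0 j) \<noteq> norm (q - P0 l)" if "q \<in> Q - N" "j \<in> J" "l \<in> J" "j \<noteq> l" for q j l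
      proof
        assume "norm (q - P0 j) = norm (q - P0 l)"
        then have "q \<in> E (P0 (fst (j,l))) (P0 (snd (j,l)))" unfolding E_def by simp
        then have "q \<in> N" unfolding N_def using that(2-4) by blast
        then show False using that(1) by blast
      qed
      have qf2: "norm (q - (a + X k)) \<noteq> norm (q - P0 l)" if "q \<in> Q - N" "l \<in> J - {i}" for q k l
      proof
        assume "norm (q - (a + X k)) = norm (q - P0 l)"
        then have "q \<in> E (a + X (fst (k,l))) (P0 (snd (k,l)))" unfolding E_def by simp
        then have "q \<in> N" unfolding N_def using that(2) by blast
        then show False using that(1) by blast
      qed
      have ggrk: "\<And>y q. gg y q = (\<Sum>j\<in>J. exp (- real (rk J (\<lambda>l. norm (q - Px y l)) j) / l0) * (norm (q - Px y j))^2)"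
        unfolding gg_def hlam_rk J_def by simp
      define M where "M = 4 * B + \<delta>"
      define C where "C = (real n + 1) * M + 2 * B"
      have C: "norm (r k q) \<le> C * \<phi> q" if q: "q \<in> Q - N" for k q
      proof -
        define x where "x = a + X k"
        define d where "d = (\<lambda>l. norm (q - P0 l))"
        define d' where "d' = (\<lambda>l. norm (q - Px x l))"
        have dd: "\<And>l. l \<noteq> i \<Longrightarrow> d' l = d l" unfolding d_def d'_def Px_def by simp
        have d'i: "d' i = norm (q - x)" unfolding d'_def Px_def by simp
        have di: "d i = norm (q - a)" unfolding d_def using P0i by simp
        have injd: "inj_on d J"
          by (rule inj_onI, rule ccontr) (use qf1[OF q] in \<open>auto simp: d_def\<close>)
        have injd': "inj_on d' J"
        proof (rule inj_onI, rule ccontr)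
          fix j l assume jl: "j \<in> J" "l \<in> J" "d' j = d' l" "j \<noteq> l"
          show False
          proof (cases "j = i \<or> l = i")
            case True
            then show ?thesis using jl qf2[OF q, of _ k] dd d'i unfolding x_def d_def
              by (metis Diff_iff singletonD)
          next
            case False
            then show ?thesis using jl qf1[OF q] dd unfolding d_def by metis
          qed
        qed
        have Wb: "\<And>m. 0 \<le> exp (- real m / l0)" "\<And>m. exp (- real m / l0) \<le> 1"
          using W_bounds[OF l0] by auto
        have lip: "\<bar>gg x q - gg a q\<bar> \<le> (real n + 1) * \<bar>(d' i)^2 - (d i)^2\<bar>"
          using lip_rank[OF finJ(1) iJ dd _ _ injd injd' Wb] finJ(2)
          unfolding ggrk d_def d'_def Pxa by simp
        have qB: "norm q \<le> B" "norm a \<le> B" using B(2) q aQ by auto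
        have nqa: "norm (q - a) \<le> 2 * B" using norm_triangle_ineq4[of q a] qB by linarith
        have nqx: "norm (q - x) \<le> 2 * B + \<delta>"
          using norm_triangle_ineq4[of "q - a" "X k"] nqa Xd[of k] unfolding x_def
          by (simp add: algebra_simps)
        have dif: "\<bar>norm (q - x) - norm (q - a)\<bar> \<le> norm (X k)"
          using norm_triangle_ineq3[of "q - x" "q - a"] unfolding x_def by (simp add: norm_minus_commute)
        have sq: "\<bar>(d' i)^2 - (d i)^2\<bar> \<le> norm (X k) * M"
        proof -
          have "\<bar>(d' i)^2 - (d i)^2\<bar> = \<bar>norm (q - x) - norm (q - a)\<bar> * (norm (q - x) + norm (q - a))"
          proof -
            have "(d' i)^2 - (d i)^2 = (norm (q - x) - norm (q - a)) * (norm (q - x) + norm (q - a))"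
              unfolding d'i di by (simp add: power2_eq_square algebra_simps)
            then show ?thesis by (simp add: abs_mult)
          qed
          also have "\<dots> \<le> norm (X k) * M"
            using dif nqa nqx unfolding M_def by (intro mult_mono) auto
          finally show ?thesis .
        qed
        have phq: "0 \<le> \<phi> q" using phinn q by blast
        have hb: "0 \<le> hlam l0 n P0 i q" "hlam l0 n P0 i q \<le> 1" using hlam_bounds[OF l0, of n P0 i q] by auto
        have Fb: "\<bar>F q \<bullet> X k\<bar> \<le> \<phi> q * (2 * B) * norm (X k)"
        proof -
          have "\<bar>F q \<bullet> X k\<bar> \<le> norm (F q) * norm (X k)" by (rule Cauchy_Schwarz_ineq2)
          also have "norm (F q) = hlam l0 n P0 i q * \<phi> q * norm (q - a)"
            unfolding F_def using hb phq by simp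
          also have "\<dots> \<le> 1 * \<phi> q * norm (q - a)"
            by (intro mult_right_mono) (use hb phq in auto)
          also have "\<dots> \<le> \<phi> q * (2 * B)"
            using nqa phq by (simp add: mult_left_mono)
          finally show ?thesis by (simp add: mult_right_mono)
        qed
        have num: "\<bar>1/2 * gg x q * \<phi> q - 1/2 * gg a q * \<phi> q + F q \<bullet> X k\<bar> \<le> C * \<phi> q * norm (X k)"
        proof -
          have "\<bar>1/2 * gg x q * \<phi> q - 1/2 * gg a q * \<phi> q\<bar> = 1/2 * \<bar>gg x q - gg a q\<bar> * \<phi> q"
          proof -
            have eq: "1/2 * gg x q * \<phi> q - 1/2 * gg a q * \<phi> q = 1/2 * (gg x q - gg a q) * \<phi> q"
              by (simp add: algebra_simps)
            have "\<bar>1/2 * (gg x q - gg a q) * \<phi> q\<bar> = \<bar>1/2 * (gg x q - gg a q)\<bar> * \<bar>\<phi> q\<bar>" by (rule abs_mult)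
            also have "\<bar>1/2 * (gg x q - gg a q)\<bar> = \<bar>1/2::real\<bar> * \<bar>gg x q - gg a q\<bar>" by (rule abs_mult)
            finally show ?thesis unfolding eq using phq by simp
          qed
          also have "\<dots> \<le> 1/2 * ((real n + 1) * (norm (X k) * M)) * \<phi> q"
          proof -
            have "\<bar>gg x q - gg a q\<bar> \<le> (real n + 1) * (norm (X k) * M)"
              by (rule order_trans[OF lip mult_left_mono[OF sq]]) simp
            then show ?thesis using phq by (intro mult_right_mono) auto
          qed
          finally have A: "\<bar>1/2 * gg x q * \<phi> q - 1/2 * gg a q * \<phi> q\<bar> \<le> 1/2 * ((real n + 1) * (norm (X k) * M)) * \<phi> q" .
          have "1/2 * ((real n + 1) * (norm (X k) * M)) * \<phi> q + \<phi> q * (2 * B) * norm (X k) \<le> C * \<phi> q * norm (X k)"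
          proof -
            have M0: "0 \<le> M" using B(1) \<delta>(1) unfolding M_def by simp
            have "1/2 * ((real n + 1) * (norm (X k) * M)) * \<phi> q \<le> (real n + 1) * M * \<phi> q * norm (X k)"
            proof -
              have z0: "0 \<le> (real n + 1) * M * \<phi> q * norm (X k)" using M0 phq by simp
              have "1/2 * ((real n + 1) * (norm (X k) * M)) * \<phi> q = 1/2 * ((real n + 1) * M * \<phi> q * norm (X k))"
                by (simp only: mult_ac)
              then show ?thesis using z0 by linarith
            qed
            then show ?thesis unfolding C_def by (simp add: algebra_simps)
          qed
          then show ?thesis using A Fb by linarith
        qed
        have "norm (r k q) = \<bar>1/2 * gg x q * \<phi> q - 1/2 * gg a q * \<phi> q + F q \<bullet> X k\<bar> / norm (X k)"
          unfolding r_def x_def by simp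
        also have "\<dots> \<le> C * \<phi> q * norm (X k) / norm (X k)"
          using num by (rule divide_right_mono) simp
        also have "\<dots> = C * \<phi> q" using Xne[of k] by simp
        finally show ?thesis .
      qed
      have conv: "(\<lambda>k. r k q) \<longlonglongrightarrow> 0" if q: "q \<in> Q - N" for q
      proof -
        define d where "d = (\<lambda>l. norm (q - P0 l))"
        have di: "d i = norm (q - a)" unfolding d_def using P0i by simp
        have neq: "d l \<noteq> norm (q - a)" if "l \<in> J - {i}" for l
          using qf1[OF q iJ, of l] that di unfolding d_def by auto
        have "(\<lambda>k. q - (a + X k)) \<longlonglongrightarrow> q - (a + 0)" by (intro tendsto_intros X0)
        then have tn: "(\<lambda>k. norm (q - (a + X k))) \<longlonglongrightarrow> norm (q - a)"
          using tendsto_norm by fastforce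
        have ev: "eventually (\<lambda>k. \<forall>l\<in>J-{i}. ((d l < norm (q - (a + X k))) = (d l < norm (q - a)))
                    \<and> ((norm (q - (a + X k)) < d l) = (norm (q - a) < d l))) sequentially"
        proof (rule eventually_ball_finite)
          show "finite (J - {i})" using finJ by simp
        next
          show "\<forall>l\<in>J-{i}. eventually (\<lambda>k. ((d l < norm (q - (a + X k))) = (d l < norm (q - a)))
                    \<and> ((norm (q - (a + X k)) < d l) = (norm (q - a) < d l))) sequentially"
          proof
            fix l assume l: "l \<in> J - {i}"
            show "eventually (\<lambda>k. ((d l < norm (q - (a + X k))) = (d l < norm (q - a)))
                    \<and> ((norm (q - (a + X k)) < d l) = (norm (q - a) < d l))) sequentially"
            proof (cases "d l < norm (q - a)")
              case True
              show ?thesis using order_tendstoD(1)[OF tn True] by eventually_elim (use True in auto)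
            next
              case False
              then have "norm (q - a) < d l" using neq[OF l] by linarith
              show ?thesis using order_tendstoD(2)[OF tn \<open>norm (q - a) < d l\<close>]
                by eventually_elim (use \<open>norm (q - a) < d l\<close> in auto)
            qed
          qed
        qed
        define w where "w = exp (- real (rk J d i) / l0)"
        have hw: "hlam l0 n P0 i q = w" unfolding w_def hlam_rk d_def J_def by simp
        have "eventually (\<lambda>k. 1/2 * w * \<phi> q * norm (X k) = r k q) sequentially"
          using ev
        proof eventually_elim
          case (elim k)
          define x where "x = a + X k"
          define d' where "d' = (\<lambda>l. norm (q - Px x l))"
          have dd: "\<And>l. l \<noteq> i \<Longrightarrow> d' l = d l" unfolding d_def d'_def Px_def by simp
          have d'i: "d' i = norm (q - x)" unfolding d'_def Px_def by simp
          have cmp: "\<And>l. l \<in> J - {i} \<Longrightarrow> (d l < d' i) = (d l < d i) \<and> (d' i < d l) = (d i < d l)"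
            using elim unfolding d'i di x_def by blast
          have rkeq: "rk J d' j = rk J d j" if j: "j \<in> J" for j
          proof (cases "j = i")
            case True
            have "{l\<in>J. d' l < d' j} = {l\<in>J. d l < d j}"
            proof (intro Collect_cong conj_cong refl)
              fix l assume "l \<in> J"
              show "(d' l < d' j) = (d l < d j)"
                using cmp[of l] dd[of l] True \<open>l \<in> J\<close> by (cases "l = i") auto
            qed
            then show ?thesis unfolding rk_def by simp
          next
            case False
            have "{l\<in>J. d' l < d' j} = {l\<in>J. d l < d j}"
            proof (intro Collect_cong conj_cong refl)
              fix l assume "l \<in> J"
              show "(d' l < d' j) = (d l < d j)"
                using cmp[of j] dd[of l] dd[OF False] j False by (cases "l = i") auto
            qed
            then show ?thesis unfolding rk_def by simp
          qed
          have ggx: "gg x q = (\<Sum>j\<in>J. exp (- real (rk J d j) / l0) * (d' j)^2)"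
            unfolding ggrk d'_def[symmetric] by (rule sum.cong) (use rkeq in \<open>auto simp: d'_def\<close>)
          have gga: "gg a q = (\<Sum>j\<in>J. exp (- real (rk J d j) / l0) * (d j)^2)"
            unfolding ggrk Pxa d_def by simp
          have "gg x q - gg a q = w * ((d' i)^2 - (d i)^2)"
          proof -
            have "gg x q = w * (d' i)^2 + (\<Sum>j\<in>J-{i}. exp (- real (rk J d j) / l0) * (d' j)^2)"
              unfolding ggx w_def using finJ iJ by (simp add: sum.remove)
            moreover have "gg a q = w * (d i)^2 + (\<Sum>j\<in>J-{i}. exp (- real (rk J d j) / l0) * (d j)^2)"
              unfolding gga w_def using finJ iJ by (simp add: sum.remove)
            moreover have "(\<Sum>j\<in>J-{i}. exp (- real (rk J d j) / l0) * (d' j)^2) = (\<Sum>j\<in>J-{i}. exp (- real (rk J d j) / l0) * (d j)^2)"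
              by (rule sum.cong) (use dd in auto)
            ultimately show ?thesis by (simp add: algebra_simps)
          qed
          moreover have "(d' i)^2 = (d i)^2 - 2 * ((q - a) \<bullet> X k) + (norm (X k))^2"
            unfolding d'i di x_def
            by (simp add: power2_norm_eq_inner inner_diff_left inner_diff_right inner_add_left inner_add_right inner_commute algebra_simps)
          moreover have "F q \<bullet> X k = w * \<phi> q * ((q - a) \<bullet> X k)"
            unfolding F_def hw by simp
          ultimately have "1/2 * gg x q * \<phi> q - 1/2 * gg a q * \<phi> q + F q \<bullet> X k = 1/2 * w * \<phi> q * (norm (X k))^2"
            by (rule alg2)
          then show ?case unfolding r_def x_def using Xne[of k] by (simp add: power2_eq_square)
        qed
        moreover have "(\<lambda>k. 1/2 * w * \<phi> q * norm (X k)) \<longlonglongrightarrow> 0"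
        proof -
          have "(\<lambda>k. norm (X k)) \<longlonglongrightarrow> 0" using X0 by (simp add: tendsto_norm_zero)
          from tendsto_mult[OF tendsto_const this, of "1/2 * w * \<phi> q"] show ?thesis by simp
        qed
        ultimately show ?thesis by (rule Lim_transform_eventually[rotated])
      qed
      have QN: "integral Q (r k) = integral (Q - N) (r k)" for k
        by (rule integral_spike_set) (auto intro: negligible_subset[OF negN])
      have intrN: "r k integrable_on (Q - N)" for k
        by (rule integrable_spike_set[OF intr]) (auto intro: negligible_subset[OF negN])
      have intCN: "(\<lambda>q. C * \<phi> q) integrable_on (Q - N)"
        by (rule integrable_spike_set[OF integrable_on_mult_right[OF assms(4)]]) (auto intro: negligible_subset[OF negN])
      have "(\<lambda>k. integral (Q - N) (r k)) \<longlonglongrightarrow> integral (Q - N) (\<lambda>q. 0::real)"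
        by (rule dominated_convergence(2)[OF intrN intCN C conv])
      then have "(\<lambda>k. integral Q (r k)) \<longlonglongrightarrow> 0" using QN by simp
      then have "(\<lambda>k. \<bar>integral Q (r k)\<bar>) \<longlonglongrightarrow> 0" by (rule tendsto_rabs_zero)
      then show "((\<lambda>h. norm (H (a + h) - H a - L h) / norm h) \<circ> X) \<longlonglongrightarrow> 0"
        using comp by presburger
    qed
    moreover have "at (0::'a) within ball 0 \<delta> = at 0" by (rule at_within_open) (use \<delta> in auto)
    ultimately have "((\<lambda>h. norm (H (a + h) - H a - L h) / norm h) \<longlongrightarrow> 0) (at 0)"
      by simp
    then show ?thesis using bl by (simp add: has_derivative_at)
  qed
  show ?thesis using main unfolding H_def L_def F_def Px_def P0_def a_def l0_def .
qed

end
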